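(* Let $T:l_\infty\to l_\infty$ be a continuous positive linear map with adjoint $T^*$. Suppose (i) for every sequence $(A_n)$ of subsets of $\mathbb N$ with $(A_n)\downarrow\emptyset$, $T(\mathbb I_{A_n})$ converges to $0$ coordinatewise; and (ii) for every $n\in\mathbb N$ there is a finite set $E_n\subseteq\mathbb N$ containing the support of $T(\mathbb I_{\{n\}})$. Then $T^*$ is a Yosida–Hewitt transformation, i.e. $T^*(\mu)\in ca(\mathbb N)$ for every $\mu\in ca(\mathbb N)$ and $T^*(\mu)\in pa(\mathbb N)$ for every $\mu\in pa(\mathbb N)$.
   Context: $l_\infty$: real bounded sequences indexed by $\mathbb N$. $\mathbb I_A$ is the indicator sequence of $A\subseteq\mathbb N$. $(A_n)\downarrow\emptyset$ means $A_n\supseteq A_{n+1}$ and $\bigcap_nA_n=\emptyset$. $ba(\mathbb N)$: norm dual of $l_\infty$ (bounded finitely additive signed measures on $2^{\mathbb N}$), pairing $\langle x,\mu\rangle$. The adjoint $T^*$ satisfies $\langle x,T^*(\mu)\rangle=\langle T(x),\mu\rangle$. $ca(\mathbb N)$ is the set of countably additive elements of $ba(\mathbb N)$; $pa(\mathbb N)$ is the set of purely finitely additive elements, i.e. $\mu$ with $\mu(\{n\})=0$ for every $n\in\mathbb N$. *)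

theory Defs
  imports "HOL-Analysis.Analysis"
begin

(* l_infinity = nat =>C real (bounded functions on discrete nat, sup norm).
   ba(N) = its norm dual (linf =>L real); a functional mu corresponds to the
   finitely additive set function A |-> <I_A, mu>. *)


type_synonym linf = "nat \<Rightarrow>\<^sub>C real"
type_synonym ba = "linf \<Rightarrow>\<^sub>L real"

definition ind :: "nat set \<Rightarrow> linf" where
  "ind A = Bcontfun (indicator A)"

definition ba_measure :: "ba \<Rightarrow> nat set \<Rightarrow> real" where
  "ba_measure \<mu> A = blinfun_apply \<mu> (ind A)"

definition positive_op :: "(linf \<Rightarrow>\<^sub>L linf) \<Rightarrow> bool" where
  "positive_op T \<longleftrightarrow> (\<forall>x. (\<forall>n. apply_bcontfun x n \<ge> 0) \<longrightarrow>
      (\<forall>n. apply_bcontfun (blinfun_apply T x) n \<ge> 0))"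

definition adjoint_op :: "(linf \<Rightarrow>\<^sub>L linf) \<Rightarrow> ba \<Rightarrow> ba" where
  "adjoint_op T \<mu> = \<mu> o\<^sub>L T"

definition is_ca :: "ba \<Rightarrow> bool" where
  "is_ca \<mu> \<longleftrightarrow> (\<forall>A::nat \<Rightarrow> nat set. disjoint_family A \<longrightarrow>
      (\<lambda>n. ba_measure \<mu> (A n)) sums ba_measure \<mu> (\<Union>n. A n))"

definition is_pa :: "ba \<Rightarrow> bool" where
  "is_pa \<mu> \<longleftrightarrow> (\<forall>n. ba_measure \<mu> {n} = 0)"

definition yosida_hewitt :: "(ba \<Rightarrow> ba) \<Rightarrow> bool" where
  "yosida_hewitt S \<longleftrightarrow> (\<forall>\<mu>. is_ca \<mu> \<longrightarrow> is_ca (S \<mu>)) \<and> (\<forall>\<mu>. is_pa \<mu> \<longrightarrow> is_pa (S \<mu>))"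

end

theory Submission imports Defs begin
lemma ind_in: "(indicator A :: nat \<Rightarrow> real) \<in> bcontfun"
  by (rule bcontfun_normI) (auto simp: continuous_on_discrete indicator_def)

lemma ind_apply[simp]: "apply_bcontfun (ind A) n = indicator A n"
  unfolding ind_def using ind_in by (simp add: Bcontfun_inverse)

lemma ind_norm: "norm (ind A) \<le> 1"
  by (rule norm_bound) (auto simp: indicator_def)

lemma ind_empty[simp]: "ind {} = 0"
  by (rule bcontfun_eqI) simp

lemma apply_sum_bcontfun: "apply_bcontfun (sum f S) x = (\<Sum>i\<in>S. apply_bcontfun (f i) x)"
  for f :: "'i \<Rightarrow> linf"
  by (induction S rule: infinite_finite_induct) auto

definition mm :: "ba \<Rightarrow> nat \<Rightarrow> real" where "mm \<mu> n = blinfun_apply \<mu> (ind {n})"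

lemma ca_sums:
  assumes "is_ca \<mu>"
  shows "(\<lambda>n. mm \<mu> n * indicator A n) sums blinfun_apply \<mu> (ind A)"
proof -
  have d: "disjoint_family (\<lambda>n. A \<inter> {n})" by (auto simp: disjoint_family_on_def)
  have u: "(\<Union>n. A \<inter> {n}) = A" by auto
  have "(\<lambda>n. ba_measure \<mu> (A \<inter> {n})) sums ba_measure \<mu> (\<Union>n. A \<inter> {n})"
    using assms d unfolding is_ca_def by blast
  moreover have "ba_measure \<mu> (A \<inter> {n}) = mm \<mu> n * indicator A n" for n
    by (cases "n \<in> A") (auto simp: ba_measure_def mm_def)
  ultimately show ?thesis using u by (simp add: ba_measure_def)
qed

lemma ca_abs_summable:
  assumes "is_ca \<mu>"
  shows "summable (\<lambda>n. \<bar>mm \<mu> n\<bar>)"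
proof -
  define P where "P = {n. mm \<mu> n \<ge> 0}"
  have s1: "summable (\<lambda>n. mm \<mu> n * indicator P n)"
    using ca_sums[OF assms] sums_summable by blast
  have s2: "summable (\<lambda>n. mm \<mu> n * indicator (-P) n)"
    using ca_sums[OF assms] sums_summable by blast
  have "summable (\<lambda>n. mm \<mu> n * indicator P n - mm \<mu> n * indicator (-P) n)"
    using s1 s2 by (rule summable_diff)
  moreover have "(\<lambda>n. mm \<mu> n * indicator P n - mm \<mu> n * indicator (-P) n) = (\<lambda>n. \<bar>mm \<mu> n\<bar>)"
    by (auto simp: P_def indicator_def)
  ultimately show ?thesis by simp
qed

lemma summable_mx:
  assumes "is_ca \<mu>"
  shows "summable (\<lambda>n. mm \<mu> n * apply_bcontfun x n)"
proof (rule summable_comparison_test)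
  show "\<exists>N. \<forall>n\<ge>N. norm (mm \<mu> n * apply_bcontfun x n) \<le> \<bar>mm \<mu> n\<bar> * norm x"
    using norm_bounded[of x] by (auto simp: abs_mult intro!: mult_left_mono)
  show "summable (\<lambda>n. \<bar>mm \<mu> n\<bar> * norm x)"
    using ca_abs_summable[OF assms] by (rule summable_mult2)
qed
definition LL :: "ba \<Rightarrow> linf \<Rightarrow> real" where
  "LL \<mu> y = (\<Sum>n. mm \<mu> n * apply_bcontfun y n)"

lemma LL_bound:
  assumes "is_ca \<mu>"
  shows "\<bar>LL \<mu> y\<bar> \<le> (\<Sum>n. \<bar>mm \<mu> n\<bar>) * norm y"
proof -
  have sa: "summable (\<lambda>n. \<bar>mm \<mu> n\<bar>)" by (rule ca_abs_summable[OF assms])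
  have s1: "summable (\<lambda>n. \<bar>mm \<mu> n * apply_bcontfun y n\<bar>)"
    apply (rule summable_rabs_comparison_test[where g="\<lambda>n. \<bar>mm \<mu> n\<bar> * norm y"])
    using norm_bounded[of y] summable_mult2[OF sa]
    by (auto simp: abs_mult intro!: mult_left_mono)
  have "\<bar>LL \<mu> y\<bar> \<le> (\<Sum>n. \<bar>mm \<mu> n * apply_bcontfun y n\<bar>)"
    unfolding LL_def using s1 by (rule summable_rabs)
  also have "\<dots> \<le> (\<Sum>n. \<bar>mm \<mu> n\<bar> * norm y)"
    using s1 summable_mult2[OF sa] norm_bounded[of y]
    by (intro suminf_le) (auto simp: abs_mult intro!: mult_left_mono)
  also have "\<dots> = (\<Sum>n. \<bar>mm \<mu> n\<bar>) * norm y"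
    using sa by (rule suminf_mult2[symmetric])
  finally show ?thesis .
qed

lemma LL_diff:
  assumes "is_ca \<mu>"
  shows "LL \<mu> (x - y) = LL \<mu> x - LL \<mu> y"
  unfolding LL_def using summable_mx[OF assms, of x] summable_mx[OF assms, of y]
  by (simp add: right_diff_distrib suminf_diff)

lemma ca_repr:
  assumes ca: "is_ca \<mu>"
  shows "blinfun_apply \<mu> x = LL \<mu> x"
proof -
  define S where "S = (\<Sum>n. \<bar>mm \<mu> n\<bar>)"
  define C where "C = norm \<mu> + S + 1"
  have S0: "S \<ge> 0" unfolding S_def using ca_abs_summable[OF ca] by (simp add: suminf_nonneg)
  have C0: "C > 0" unfolding C_def using S0 by (simp add: add_nonneg_pos)
  have key: "\<bar>blinfun_apply \<mu> x - LL \<mu> x\<bar> \<le> C * \<epsilon>" if e: "\<epsilon> > 0" for \<epsilon>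
  proof -
    define j where "j n = \<lfloor>apply_bcontfun x n / \<epsilon>\<rfloor>" for n
    define K where "K = \<lceil>norm x / \<epsilon>\<rceil>"
    define J where "J = range j"
    have jb: "j n \<in> {-K..K}" for n
    proof -
      have b: "\<bar>apply_bcontfun x n\<bar> \<le> norm x" using norm_bounded[of x n] by simp
      hence "apply_bcontfun x n / \<epsilon> \<le> norm x / \<epsilon>" "- (norm x / \<epsilon>) \<le> apply_bcontfun x n / \<epsilon>"
        using e by (auto simp: divide_right_mono abs_le_iff field_simps)
      moreover have "norm x / \<epsilon> \<le> of_int K" unfolding K_def by simp
      moreover have "of_int (j n) \<le> apply_bcontfun x n / \<epsilon>" "apply_bcontfun x n / \<epsilon> < of_int (j n) + 1"
        unfolding j_def by linarith+
      ultimately have "real_of_int (j n) \<le> of_int K" "real_of_int (- K) < of_int (j n) + 1" by linarith+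
      hence "j n \<le> K" "- K \<le> j n" by linarith+
      thus ?thesis by simp
    qed
    have fJ: "finite J" unfolding J_def using jb by (meson finite_atLeastAtMost_int finite_subset image_subset_iff)
    define s where "s = (\<Sum>i\<in>J. (\<epsilon> * of_int i) *\<^sub>R ind {n. j n = i})"
    have sn: "apply_bcontfun s n = \<epsilon> * of_int (j n)" for n
    proof -
      have "apply_bcontfun s n = (\<Sum>i\<in>J. if i = j n then \<epsilon> * of_int i else 0)"
        unfolding s_def apply_sum_bcontfun by (intro sum.cong) (auto simp: indicator_def)
      also have "\<dots> = \<epsilon> * of_int (j n)" using fJ by (simp add: J_def)
      finally show ?thesis .
    qed
    have xs: "norm (x - s) \<le> \<epsilon>"
    proof (rule norm_bound)
      fix n
      have "of_int (j n) \<le> apply_bcontfun x n / \<epsilon>" "apply_bcontfun x n / \<epsilon> < of_int (j n) + 1"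
        unfolding j_def by linarith+
      hence "\<epsilon> * of_int (j n) \<le> apply_bcontfun x n" "apply_bcontfun x n < \<epsilon> * of_int (j n) + \<epsilon>"
        using e by (auto simp: field_simps)
      thus "norm (apply_bcontfun (x - s) n) \<le> \<epsilon>" by (simp add: sn)
    qed
    have sm: "\<And>i. summable (\<lambda>n. mm \<mu> n * indicator {n. j n = i} n)"
      using ca_sums[OF ca] sums_summable by blast
    have "blinfun_apply \<mu> s = (\<Sum>i\<in>J. (\<epsilon> * of_int i) * blinfun_apply \<mu> (ind {n. j n = i}))"
      unfolding s_def by (simp add: blinfun.sum_right blinfun.scaleR_right)
    also have "\<dots> = (\<Sum>i\<in>J. (\<Sum>n. (\<epsilon> * of_int i) * (mm \<mu> n * indicator {n. j n = i} n)))"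
    proof (intro sum.cong refl)
      fix i
      have "blinfun_apply \<mu> (ind {n. j n = i}) = (\<Sum>n. mm \<mu> n * indicator {n. j n = i} n)"
        using ca_sums[OF ca] by (rule sums_unique)
      thus "(\<epsilon> * of_int i) * blinfun_apply \<mu> (ind {n. j n = i}) = (\<Sum>n. (\<epsilon> * of_int i) * (mm \<mu> n * indicator {n. j n = i} n))"
        using suminf_mult[OF sm[of i], of "\<epsilon> * of_int i"] by simp
    qed
    also have "\<dots> = (\<Sum>n. \<Sum>i\<in>J. (\<epsilon> * of_int i) * (mm \<mu> n * indicator {n. j n = i} n))"
      using sm by (intro suminf_sum[symmetric] summable_mult)
    also have "\<dots> = LL \<mu> s"
      unfolding LL_def s_def apply_sum_bcontfun
    proof (intro suminf_cong)
      fix n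
      show "(\<Sum>i\<in>J. (\<epsilon> * of_int i) * (mm \<mu> n * indicator {n. j n = i} n)) =
        mm \<mu> n * (\<Sum>i\<in>J. apply_bcontfun ((\<epsilon> * of_int i) *\<^sub>R ind {n. j n = i}) n)"
        by (simp add: sum_distrib_left mult.left_commute)
    qed
    finally have ms: "blinfun_apply \<mu> s = LL \<mu> s" .
    have "blinfun_apply \<mu> x - LL \<mu> x = blinfun_apply \<mu> (x - s) - LL \<mu> (x - s)"
      using ms LL_diff[OF ca, of x s] by (simp add: blinfun.diff_right)
    also have "\<bar>\<dots>\<bar> \<le> norm \<mu> * norm (x - s) + S * norm (x - s)"
      using norm_blinfun[of \<mu> "x - s"] LL_bound[OF ca, of "x - s"] unfolding S_def by simp
    also have "\<dots> \<le> norm \<mu> * \<epsilon> + S * \<epsilon>"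
      using xs S0 by (intro add_mono mult_left_mono) auto
    also have "\<dots> \<le> C * \<epsilon>" using e unfolding C_def by (simp add: algebra_simps)
    finally show ?thesis .
  qed
  have "\<bar>blinfun_apply \<mu> x - LL \<mu> x\<bar> \<le> 0"
  proof (rule field_le_epsilon)
    fix e :: real assume "e > 0"
    thus "\<bar>blinfun_apply \<mu> x - LL \<mu> x\<bar> \<le> 0 + e"
      using key[of "e / C"] C0 by simp
  qed
  thus ?thesis by simp
qed
lemma ba_adj: "ba_measure (adjoint_op T \<mu>) A = blinfun_apply \<mu> (blinfun_apply T (ind A))"
  by (simp add: ba_measure_def adjoint_op_def)

theorem lemma3:
  fixes T :: "linf \<Rightarrow>\<^sub>L linf"
  assumes pos: "positive_op T"
    and i: "\<And>A :: nat \<Rightarrow> nat set. decseq A \<Longrightarrow> (\<Inter>n. A n) = {} \<Longrightarrow>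
             (\<forall>k. (\<lambda>n. apply_bcontfun (blinfun_apply T (ind (A n))) k) \<longlonglongrightarrow> 0)"
    and ii: "\<And>n. \<exists>E. finite E \<and> {k. apply_bcontfun (blinfun_apply T (ind {n})) k \<noteq> 0} \<subseteq> E"
  shows "yosida_hewitt (adjoint_op T)"
  unfolding yosida_hewitt_def
proof (intro conjI allI impI)
  fix \<mu> assume pa: "is_pa \<mu>"
  show "is_pa (adjoint_op T \<mu>)" unfolding is_pa_def ba_adj
  proof
    fix n
    define y where "y = blinfun_apply T (ind {n})"
    obtain E where E: "finite E" "{k. apply_bcontfun y k \<noteq> 0} \<subseteq> E" using ii[of n] y_def by blast
    have ye: "y = (\<Sum>k\<in>E. apply_bcontfun y k *\<^sub>R ind {k})"
    proof (rule bcontfun_eqI)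
      fix j
      show "apply_bcontfun y j = apply_bcontfun (\<Sum>k\<in>E. apply_bcontfun y k *\<^sub>R ind {k}) j"
      proof (cases "j \<in> E")
        case True
        have "(\<Sum>k\<in>E. apply_bcontfun y k * indicator {k} j) = (\<Sum>k\<in>E. if k = j then apply_bcontfun y k else 0)"
          by (intro sum.cong) (auto simp: indicator_def)
        thus ?thesis using True E(1) by (simp add: apply_sum_bcontfun)
      next
        case False
        hence "apply_bcontfun y j = 0" using E(2) by blast
        moreover have "(\<Sum>k\<in>E. apply_bcontfun y k * indicator {k} j) = 0"
          using False by (intro sum.neutral) (auto simp: indicator_def)
        ultimately show ?thesis by (simp add: apply_sum_bcontfun)
      qed
    qed
    have "blinfun_apply \<mu> y = (\<Sum>k\<in>E. apply_bcontfun y k * blinfun_apply \<mu> (ind {k}))"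
      by (subst ye) (simp add: blinfun.sum_right blinfun.scaleR_right)
    also have "\<dots> = 0" using pa unfolding is_pa_def ba_measure_def by simp
    finally show "blinfun_apply \<mu> (blinfun_apply T (ind {n})) = 0" unfolding y_def .
  qed
next
  fix \<mu> assume ca: "is_ca \<mu>"
  show "is_ca (adjoint_op T \<mu>)" unfolding is_ca_def ba_adj
  proof (intro allI impI)
    fix A :: "nat \<Rightarrow> nat set" assume dA: "disjoint_family A"
    define U where "U = (\<Union>n. A n)"
    define B where "B N = (\<Union>n\<in>{..<N}. A n)" for N
    define C where "C N = U - B N" for N
    define f where "f X = blinfun_apply \<mu> (blinfun_apply T (ind X))" for X
    have part: "(\<Sum>n<N. f (A n)) = f (B N)" for N
    proof -
      have "ind (B N) = (\<Sum>n<N. ind (A n))"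
      proof (rule bcontfun_eqI)
        fix x
        show "apply_bcontfun (ind (B N)) x = apply_bcontfun (\<Sum>n<N. ind (A n)) x"
          unfolding B_def apply_sum_bcontfun ind_apply
          by (rule indicator_UN_disjoint) (use dA in \<open>auto simp: disjoint_family_on_def\<close>)
      qed
      thus ?thesis unfolding f_def by (simp add: blinfun.sum_right)
    qed
    have split: "f U = f (B N) + f (C N)" for N
    proof -
      have "ind U = ind (B N) + ind (C N)"
        by (rule bcontfun_eqI) (auto simp: C_def B_def U_def indicator_def)
      thus ?thesis unfolding f_def by (simp add: blinfun.add_right)
    qed
    have decC: "decseq C"
      unfolding decseq_def C_def B_def by auto
    have emC: "(\<Inter>N. C N) = {}"
    proof (rule ccontr)
      assume "(\<Inter>N. C N) \<noteq> {}"
      then obtain x where "\<forall>N. x \<in> C N" by blast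
      hence "x \<in> U" "\<forall>N. x \<notin> B N" unfolding C_def by auto
      then obtain n where "x \<in> A n" "\<forall>N. x \<notin> B N" unfolding U_def by auto
      thus False unfolding B_def by (metis UN_I lessI lessThan_iff)
    qed
    define y where "y N = blinfun_apply T (ind (C N))" for N
    have ylim: "(\<lambda>N. apply_bcontfun (y N) k) \<longlonglongrightarrow> 0" for k
      using i[OF decC emC] unfolding y_def by blast
    have ybound: "\<bar>apply_bcontfun (y N) k\<bar> \<le> norm T" for N k
    proof -
      have "\<bar>apply_bcontfun (y N) k\<bar> \<le> norm (y N)" using norm_bounded[of "y N" k] by simp
      also have "\<dots> \<le> norm T * norm (ind (C N))" unfolding y_def by (rule norm_blinfun)
      also have "\<dots> \<le> norm T * 1" using ind_norm by (intro mult_left_mono) auto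
      finally show ?thesis by simp
    qed
    have "(\<lambda>N. (\<Sum>k. mm \<mu> k * apply_bcontfun (y N) k)) \<longlonglongrightarrow> (\<Sum>k. (0::real))"
    proof -
      have "eventually (\<lambda>N. summable (\<lambda>k. norm (mm \<mu> k * apply_bcontfun (y N) k))) sequentially \<and>
           summable (\<lambda>n. norm (0::real)) \<and>
           ((\<lambda>N. suminf (\<lambda>k. mm \<mu> k * apply_bcontfun (y N) k)) \<longlonglongrightarrow> suminf (\<lambda>k. 0::real))"
      proof (rule tannerys_theorem[where M = "\<lambda>k. \<bar>mm \<mu> k\<bar> * norm T"])
        show "\<And>k. (\<lambda>N. mm \<mu> k * apply_bcontfun (y N) k) \<longlonglongrightarrow> 0"
          using ylim tendsto_mult_right_zero by blast
        show "eventually (\<lambda>(k, N). norm (mm \<mu> k * apply_bcontfun (y N) k) \<le> \<bar>mm \<mu> k\<bar> * norm T)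
               (at_top \<times>\<^sub>F sequentially)"
          by (rule always_eventually) (auto simp: abs_mult intro!: mult_left_mono ybound)
        show "summable (\<lambda>k. \<bar>mm \<mu> k\<bar> * norm T)"
          using ca_abs_summable[OF ca] by (rule summable_mult2)
      qed simp
      thus ?thesis by blast
    qed
    hence fC: "(\<lambda>N. f (C N)) \<longlonglongrightarrow> 0"
      unfolding f_def ca_repr[OF ca] LL_def y_def by simp
    have "(\<lambda>N. f U - f (C N)) \<longlonglongrightarrow> f U - 0"
      by (intro tendsto_diff tendsto_const fC)
    hence "(\<lambda>N. \<Sum>n<N. f (A n)) \<longlonglongrightarrow> f U"
    proof -
      have "(\<lambda>N. f U - f (C N)) = (\<lambda>N. \<Sum>n<N. f (A n))"
        using part split by (auto simp: algebra_simps)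
      thus ?thesis using \<open>(\<lambda>N. f U - f (C N)) \<longlonglongrightarrow> f U - 0\<close> by simp
    qed
    thus "(\<lambda>n. blinfun_apply \<mu> (blinfun_apply T (ind (A n)))) sums
          blinfun_apply \<mu> (blinfun_apply T (ind (\<Union>n. A n)))"
      unfolding sums_def f_def U_def .
  qed
qed
end
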